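(* Let $X$ and $Y$ be nonempty sets with $\operatorname{card} Y\ge 2$, and let $\mathcal P$ be a nonempty collection of subsets of $X$. Define the binary relation $\hat{\mathcal P}_w$ on $Y^X$ by declaring $f\,\hat{\mathcal P}_w\,g$ if and only if there exists $P\in\mathcal P$ with $P\subseteq\{x\in X\mid f(x)=g(x)\}$. Then $\mathcal P$ is a filterbase on $X$ if and only if $\hat{\mathcal P}_w$ is a nontrivial equivalence relation on $Y^X$.
   Context: Let $X$ be a nonempty set. A nonempty collection $\mathcal P$ of subsets of $X$ is a filterbase on $X$ if it satisfies: (F0) for every $n\ge 1$ and all $A_1,\dots,A_n\in\mathcal P$, $A_1\cap\cdots\cap A_n\neq\emptyset$; (F2) for all $A,B\in\mathcal P$ there is $C\in\mathcal P$ with $C\subseteq A\cap B$. $Y^X$ denotes the set of all functions $X\to Y$. An equivalence relation on a set $S$ is called nontrivial if it is not the total relation $S\times S$ (i.e. not all pairs of elements are related). *)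

theory Defs
  imports "HOL-Library.FuncSet"
begin

definition filterbase :: "'a set \<Rightarrow> 'a set set \<Rightarrow> bool" where
  "filterbase X \<P> \<longleftrightarrow>
     \<P> \<subseteq> Pow X \<and> \<P> \<noteq> {} \<and>
     (\<forall>n::nat. n \<ge> 1 \<longrightarrow> (\<forall>A. (\<forall>i<n. A i \<in> \<P>) \<longrightarrow> (\<Inter>i<n. A i) \<noteq> {})) \<and>
     (\<forall>A\<in>\<P>. \<forall>B\<in>\<P>. \<exists>C\<in>\<P>. C \<subseteq> A \<inter> B)"

definition funspace :: "'a set \<Rightarrow> 'b set \<Rightarrow> ('a \<Rightarrow> 'b) set" where
  "funspace X Y = (X \<rightarrow>\<^sub>E Y)"

definition weak_rel :: "'a set \<Rightarrow> 'b set \<Rightarrow> 'a set set \<Rightarrow> (('a \<Rightarrow> 'b) \<times> ('a \<Rightarrow> 'b)) set" where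
  "weak_rel X Y \<P> = {(f, g). f \<in> funspace X Y \<and> g \<in> funspace X Y \<and>
      (\<exists>P\<in>\<P>. P \<subseteq> {x\<in>X. f x = g x})}"

definition nontrivial_equiv :: "'c set \<Rightarrow> ('c \<times> 'c) set \<Rightarrow> bool" where
  "nontrivial_equiv S R \<longleftrightarrow> equiv S R \<and> R \<noteq> S \<times> S"

end

theory Submission
  imports Defs
begin

lemma fs_mem: "(\<And>x. x \<in> X \<Longrightarrow> c x \<in> Y) \<Longrightarrow> restrict c X \<in> funspace X Y"
  unfolding funspace_def by auto

lemma chain_ex:
  fixes n :: nat
  assumes F2: "\<forall>A\<in>P. \<forall>B\<in>P. \<exists>C\<in>P. C \<subseteq> A \<inter> B"
  shows "n \<ge> 1 \<Longrightarrow> (\<forall>i<n. A i \<in> P) \<Longrightarrow> \<exists>C\<in>P. C \<subseteq> (\<Inter>i<n. A i)"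
proof (induction n)
  case 0 then show ?case by simp
next
  case (Suc n)
  show ?case
  proof (cases "n = 0")
    case True then show ?thesis using Suc by auto
  next
    case False
    then obtain C where C: "C \<in> P" "C \<subseteq> (\<Inter>i<n. A i)" using Suc by auto
    have An: "A n \<in> P" using Suc.prems by simp
    obtain D where D: "D \<in> P" "D \<subseteq> C \<inter> A n" using F2 C(1) An by blast
    have "(\<Inter>i<Suc n. A i) = (\<Inter>i<n. A i) \<inter> A n" by (auto simp: lessThan_Suc)
    then show ?thesis using C D by auto
  qed
qed

lemma wr_iff: "(f,g) \<in> weak_rel X Y P \<longleftrightarrow> f \<in> funspace X Y \<and> g \<in> funspace X Y \<and> (\<exists>Q\<in>P. \<forall>x\<in>Q. x \<in> X \<and> f x = g x)"
  unfolding weak_rel_def by blast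

theorem mainTheorem2:
  fixes X :: "'a set" and Y :: "'b set" and \<P> :: "'a set set"
  assumes "X \<noteq> {}"
    and "\<exists>y1\<in>Y. \<exists>y2\<in>Y. y1 \<noteq> y2"
    and "\<P> \<noteq> {}"
    and "\<P> \<subseteq> Pow X"
  shows "filterbase X \<P> \<longleftrightarrow> nontrivial_equiv (funspace X Y) (weak_rel X Y \<P>)"
proof -
  obtain y1 y2 where y: "y1 \<in> Y" "y2 \<in> Y" "y1 \<noteq> y2" using assms(2) by auto
  obtain P0 where P0: "P0 \<in> \<P>" using assms(3) by auto
  have sub: "weak_rel X Y \<P> \<subseteq> funspace X Y \<times> funspace X Y"
  proof
    fix p assume "p \<in> weak_rel X Y \<P>"
    then show "p \<in> funspace X Y \<times> funspace X Y" by (cases p) (simp only: wr_iff mem_Times_iff fst_conv snd_conv)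
  qed
  have diag: "(f,f) \<in> weak_rel X Y \<P>" if "f \<in> funspace X Y" for f
  proof -
    have "\<forall>x\<in>P0. x \<in> X \<and> f x = f x" using P0 assms(4) by blast
    then show ?thesis unfolding wr_iff using that P0 by blast
  qed
  have refl: "refl_on (funspace X Y) (weak_rel X Y \<P>)"
    using sub diag by (simp add: refl_on_def)
  have sym: "sym (weak_rel X Y \<P>)"
  proof (rule symI)
    fix f g assume "(f,g) \<in> weak_rel X Y \<P>"
    then obtain Q where Q: "Q \<in> \<P>" "\<forall>x\<in>Q. x \<in> X \<and> f x = g x" "f \<in> funspace X Y" "g \<in> funspace X Y"
      unfolding wr_iff by blast
    then have "\<forall>x\<in>Q. x \<in> X \<and> g x = f x" by simp
    then show "(g,f) \<in> weak_rel X Y \<P>" unfolding wr_iff using Q by blast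
  qed
  show ?thesis
  proof
    assume fb: "filterbase X \<P>"
    have F2: "\<forall>A\<in>\<P>. \<forall>B\<in>\<P>. \<exists>C\<in>\<P>. C \<subseteq> A \<inter> B" using fb unfolding filterbase_def by blast
    have ne: "P \<noteq> {}" if "P \<in> \<P>" for P
    proof -
      have F0: "\<forall>n::nat. n \<ge> 1 \<longrightarrow> (\<forall>A. (\<forall>i<n. A i \<in> \<P>) \<longrightarrow> (\<Inter>i<n. A i) \<noteq> {})"
        using fb unfolding filterbase_def by blast
      have "(\<Inter>i<(1::nat). (\<lambda>_. P) i) \<noteq> {}" using F0[rule_format, of 1 "\<lambda>_. P"] that by simp
      then show ?thesis by (simp add: lessThan_Suc)
    qed
    have trans: "trans (weak_rel X Y \<P>)"
    proof (rule transI)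
      fix f g h assume "(f,g) \<in> weak_rel X Y \<P>" "(g,h) \<in> weak_rel X Y \<P>"
      then obtain A B where AB: "A \<in> \<P>" "B \<in> \<P>" "\<forall>x\<in>A. x \<in> X \<and> f x = g x" "\<forall>x\<in>B. x \<in> X \<and> g x = h x"
        "f \<in> funspace X Y" "h \<in> funspace X Y" unfolding wr_iff by blast
      then obtain C where "C \<in> \<P>" "C \<subseteq> A \<inter> B" using F2 by blast
      then have "\<forall>x\<in>C. x \<in> X \<and> f x = h x" using AB(3,4) by (metis IntE subsetD)
      then show "(f,h) \<in> weak_rel X Y \<P>" using AB(5,6) \<open>C \<in> \<P>\<close> unfolding wr_iff by blast
    qed
    let ?f = "restrict (\<lambda>_. y1) X" and ?g = "restrict (\<lambda>_. y2) X"
    have "?f \<in> funspace X Y" "?g \<in> funspace X Y" using y by (auto intro: fs_mem)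
    moreover have "(?f, ?g) \<notin> weak_rel X Y \<P>"
    proof
      assume "(?f, ?g) \<in> weak_rel X Y \<P>"
      then obtain P where P: "P \<in> \<P>" "\<forall>x\<in>P. x \<in> X \<and> ?f x = ?g x" unfolding wr_iff by blast
      have "P = {}"
      proof (rule ccontr)
        assume "P \<noteq> {}"
        then obtain x where "x \<in> P" by blast
        then have "x \<in> X" "?f x = ?g x" using P by auto
        then show False using y by simp
      qed
      then show False using ne P(1) by blast
    qed
    ultimately have "weak_rel X Y \<P> \<noteq> funspace X Y \<times> funspace X Y" by blast
    moreover have "equiv (funspace X Y) (weak_rel X Y \<P>)" using sub refl sym trans by (rule equivI)
    ultimately show "nontrivial_equiv (funspace X Y) (weak_rel X Y \<P>)"
      unfolding nontrivial_equiv_def by blast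
  next
    assume ne: "nontrivial_equiv (funspace X Y) (weak_rel X Y \<P>)"
    have tr: "trans (weak_rel X Y \<P>)" using ne unfolding nontrivial_equiv_def by (blast elim: equivE)
    have emp: "{} \<notin> \<P>"
    proof
      assume "{} \<in> \<P>"
      then have "\<forall>f\<in>funspace X Y. \<forall>g\<in>funspace X Y. (f,g) \<in> weak_rel X Y \<P>" unfolding wr_iff by blast
      then have "weak_rel X Y \<P> = funspace X Y \<times> funspace X Y" using sub by auto
      then show False using ne unfolding nontrivial_equiv_def by blast
    qed
    have F2: "\<forall>A\<in>\<P>. \<forall>B\<in>\<P>. \<exists>C\<in>\<P>. C \<subseteq> A \<inter> B"
    proof (intro ballI)
      fix A B assume AB: "A \<in> \<P>" "B \<in> \<P>"
      let ?f = "restrict (\<lambda>_. y1) X"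
      let ?g = "restrict (\<lambda>x. if x \<in> A then y1 else y2) X"
      let ?h = "restrict (\<lambda>x. if x \<in> A \<inter> B then y1 else y2) X"
      have m: "?f \<in> funspace X Y" "?g \<in> funspace X Y" "?h \<in> funspace X Y" using y by (auto intro: fs_mem)
      have "\<forall>x\<in>A. x \<in> X \<and> ?f x = ?g x" using AB assms(4) by auto
      then have "(?f, ?g) \<in> weak_rel X Y \<P>" using m AB unfolding wr_iff by blast
      moreover have "\<forall>x\<in>B. x \<in> X \<and> ?g x = ?h x" using AB assms(4) by auto
      then have "(?g, ?h) \<in> weak_rel X Y \<P>" using m AB unfolding wr_iff by blast
      ultimately have "(?f, ?h) \<in> weak_rel X Y \<P>" using tr by (meson transD)
      then obtain C where C: "C \<in> \<P>" "C \<subseteq> {x\<in>X. ?f x = ?h x}" unfolding weak_rel_def by auto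
      have "{x\<in>X. ?f x = ?h x} \<subseteq> A \<inter> B" using y by auto
      then show "\<exists>C\<in>\<P>. C \<subseteq> A \<inter> B" using C by blast
    qed
    have F0: "\<forall>n::nat. n \<ge> 1 \<longrightarrow> (\<forall>A. (\<forall>i<n. A i \<in> \<P>) \<longrightarrow> (\<Inter>i<n. A i) \<noteq> {})"
    proof (intro allI impI)
      fix n :: nat and A assume n: "n \<ge> 1" "\<forall>i<n. A i \<in> \<P>"
      obtain C where C: "C \<in> \<P>" "C \<subseteq> (\<Inter>i<n. A i)" using chain_ex[OF F2 n] by (elim bexE)
      have "C \<noteq> {}" using C(1) emp by metis
      then show "(\<Inter>i<n. A i) \<noteq> {}" using C(2) by (metis subset_empty)
    qed
    show "filterbase X \<P>" unfolding filterbase_def by (intro conjI) (rule assms(4), rule assms(3), rule F0, rule F2)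
  qed
qed

end
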